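(* Let $\mathfrak K=(K,\bigsqcup,\odot,{}^*,{\sim},e)$ be an involutive generalized dynamic algebra, and define $\bullet\colon K\times\widetilde K\to\widetilde K$ by $k\bullet v={\sim}{\sim}(k\odot v)$. Then ${\sim}{\sim}{\sim}v={\sim}v$ for every $v\in K$, and $(\widetilde K,\bigvee,\bullet)$ is a left unital $K$-module (with $(\widetilde K,\preceq)$ a complete lattice whose joins are given by $\bigvee$), with least element ${\sim}{\sim}0$ and greatest element ${\sim}{\sim}1$.
   Context: An involutive unital quantale is $(Q,\bigsqcup,\odot,{}^*,e)$: $Q$ a complete join-semilattice (order $\sqsubseteq$, $0=\bigsqcup\emptyset$, $1=\bigsqcup Q$), $\odot$ associative and distributing over arbitrary joins in each argument, $e$ a two-sided unit, ${}^*$ with $x^{**}=x$, $(x\odot y)^*=y^*\odot x^*$, $(\bigsqcup_i x_i)^*=\bigsqcup_i x_i^*$. An involutive generalized dynamic algebra is $\mathfrak K=(K,\bigsqcup,\odot,{}^*,{\sim},e)$ with $(K,\bigsqcup,\odot,{}^*,e)$ an involutive unital quantale and ${\sim}\colon K\to K$ such that for all $x,y\in K$ and families $(x_i)_{i\in I}$: ${\sim}(x\odot{\sim}{\sim}y)={\sim}(x\odot y)$; ${\sim}(\bigsqcup_i{\sim}{\sim}x_i)={\sim}(\bigsqcup_i x_i)$; $({\sim}x)^*={\sim}x$; ${\sim}{\sim}({\sim}{\sim}x\odot y)={\sim}({\sim}x\sqcup{\sim}({\sim}x\sqcup y))$. Test set $\widetilde K=\{{\sim}k\mid k\in K\}$;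 for $W\subseteq\widetilde K$, $\bigvee W={\sim}{\sim}(\bigsqcup W)$; $k\preceq l$ iff $\bigvee\{k,l\}=l$. For a unital quantale $(Q,\bigsqcup,\odot,e)$, a left unital $Q$-module is a complete join-semilattice $(A,\bigvee)$ with a map $\bullet\colon Q\times A\to A$ such that $v\bullet\bigvee S=\bigvee_{s\in S}v\bullet s$, $(\bigsqcup T)\bullet a=\bigvee_{t\in T}t\bullet a$, $u\bullet(v\bullet a)=(u\odot v)\bullet a$, and $e\bullet a=a$. *)

theory Defs
  imports Main
begin

text \<open>The carrier K is modelled as a type 'a of class complete_lattice; the
quantale join is Sup (so the order is the lattice order, 0 = Sup {} = bot and
1 = Sup UNIV = top).  A complete join-semilattice structure on a type determines
the complete lattice uniquely.\<close>

definition involutive_unital_quantale ::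
  "('a::complete_lattice \<Rightarrow> 'a \<Rightarrow> 'a) \<Rightarrow> ('a \<Rightarrow> 'a) \<Rightarrow> 'a \<Rightarrow> bool" where
  "involutive_unital_quantale mult invl e \<longleftrightarrow>
     (\<forall>x y z. mult (mult x y) z = mult x (mult y z)) \<and>
     (\<forall>x Y. mult x (Sup Y) = Sup (mult x ` Y)) \<and>
     (\<forall>x Y. mult (Sup Y) x = Sup ((\<lambda>y. mult y x) ` Y)) \<and>
     (\<forall>x. mult e x = x \<and> mult x e = x) \<and>
     (\<forall>x. invl (invl x) = x) \<and>
     (\<forall>x y. invl (mult x y) = mult (invl y) (invl x)) \<and>
     (\<forall>X. invl (Sup X) = Sup (invl ` X))"

definition igda ::
  "('a::complete_lattice \<Rightarrow> 'a \<Rightarrow> 'a) \<Rightarrow> ('a \<Rightarrow> 'a) \<Rightarrow> ('a \<Rightarrow> 'a) \<Rightarrow> 'a \<Rightarrow> bool" where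
  "igda mult invl neg e \<longleftrightarrow>
     involutive_unital_quantale mult invl e \<and>
     (\<forall>x y. neg (mult x (neg (neg y))) = neg (mult x y)) \<and>
     (\<forall>X. neg (Sup ((\<lambda>x. neg (neg x)) ` X)) = neg (Sup X)) \<and>
     (\<forall>x. invl (neg x) = neg x) \<and>
     (\<forall>x y. neg (neg (mult (neg (neg x)) y)) = neg (sup (neg x) (neg (sup (neg x) y))))"

definition tests :: "('a \<Rightarrow> 'a) \<Rightarrow> 'a set" where
  "tests neg = range neg"

definition tjoin :: "('a::complete_lattice \<Rightarrow> 'a) \<Rightarrow> 'a set \<Rightarrow> 'a" where
  "tjoin neg W = neg (neg (Sup W))"

definition tle :: "('a::complete_lattice \<Rightarrow> 'a) \<Rightarrow> 'a \<Rightarrow> 'a \<Rightarrow> bool" where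
  "tle neg k l \<longleftrightarrow> tjoin neg {k, l} = l"

definition complete_join_semilattice :: "'b set \<Rightarrow> ('b set \<Rightarrow> 'b) \<Rightarrow> bool" where
  "complete_join_semilattice A J \<longleftrightarrow>
     (\<forall>W \<subseteq> A. J W \<in> A) \<and>
     (\<forall>x\<in>A. J {x, x} = x) \<and>
     (\<forall>x\<in>A. \<forall>y\<in>A. J {x, y} = y \<and> J {y, x} = x \<longrightarrow> x = y) \<and>
     (\<forall>x\<in>A. \<forall>y\<in>A. \<forall>z\<in>A. J {x, y} = y \<and> J {y, z} = z \<longrightarrow> J {x, z} = z) \<and>
     (\<forall>W \<subseteq> A. (\<forall>w\<in>W. J {w, J W} = J W) \<and>
                (\<forall>u\<in>A. (\<forall>w\<in>W. J {w, u} = u) \<longrightarrow> J {J W, u} = u))"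

definition left_unital_module ::
  "('a::complete_lattice \<Rightarrow> 'a \<Rightarrow> 'a) \<Rightarrow> 'a \<Rightarrow> 'b set \<Rightarrow> ('b set \<Rightarrow> 'b) \<Rightarrow> ('a \<Rightarrow> 'b \<Rightarrow> 'b) \<Rightarrow> bool" where
  "left_unital_module mult e A J act \<longleftrightarrow>
     complete_join_semilattice A J \<and>
     (\<forall>v a. a \<in> A \<longrightarrow> act v a \<in> A) \<and>
     (\<forall>v S. S \<subseteq> A \<longrightarrow> act v (J S) = J (act v ` S)) \<and>
     (\<forall>T a. a \<in> A \<longrightarrow> act (Sup T) a = J ((\<lambda>t. act t a) ` T)) \<and>
     (\<forall>u v a. a \<in> A \<longrightarrow> act u (act v a) = act (mult u v) a) \<and>
     (\<forall>a\<in>A. act e a = a)"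

end

theory Submission
  imports Defs
begin

theorem theorem3p3:
  fixes mult :: "'a::complete_lattice \<Rightarrow> 'a \<Rightarrow> 'a"
    and invl neg :: "'a \<Rightarrow> 'a" and e :: 'a
  assumes "igda mult invl neg e"
  shows "(\<forall>v. neg (neg (neg v)) = neg v)
    \<and> left_unital_module mult e (tests neg) (tjoin neg) (\<lambda>k v. neg (neg (mult k v)))
    \<and> neg (neg (Sup {})) \<in> tests neg \<and> neg (neg (Sup UNIV)) \<in> tests neg
    \<and> (\<forall>v \<in> tests neg. tle neg (neg (neg (Sup {}))) v \<and> tle neg v (neg (neg (Sup UNIV))))"
proof -
  have Q: "involutive_unital_quantale mult invl e" using assms unfolding igda_def by blast
  have assoc: "\<And>x y z. mult (mult x y) z = mult x (mult y z)"
    and distl: "\<And>x Y. mult x (Sup Y) = Sup (mult x ` Y)"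
    and unit: "\<And>x. mult e x = x"
    using Q unfolding involutive_unital_quantale_def by blast+
  have A1: "\<And>x y. neg (mult x (neg (neg y))) = neg (mult x y)"
    and A2: "\<And>X. neg (Sup ((\<lambda>x. neg (neg x)) ` X)) = neg (Sup X)"
    using assms unfolding igda_def by blast+
  have triple: "\<And>v. neg (neg (neg v)) = neg v" using A1[of e] unit by simp
  have T: "\<And>t. t \<in> tests neg \<Longrightarrow> neg (neg t) = t"
    unfolding tests_def using triple by auto
  have L: "\<And>X. neg (neg (Sup ((\<lambda>x. neg (neg x)) ` X))) = neg (neg (Sup X))"
    using A2 by simp
  have L2: "\<And>a b. neg (neg (sup (neg (neg a)) (neg (neg b)))) = neg (neg (sup a b))"
  proof -
    fix a b show "neg (neg (sup (neg (neg a)) (neg (neg b)))) = neg (neg (sup a b))"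
      using L[of "{a,b}"] by simp
  qed
  have M1: "\<And>k v. neg (neg (mult k v)) \<in> tests neg" unfolding tests_def by simp
  have cjs: "complete_join_semilattice (tests neg) (tjoin neg)"
    unfolding complete_join_semilattice_def tjoin_def
  proof (intro conjI ballI allI impI)
    fix W :: "'a set" show "neg (neg (Sup W)) \<in> tests neg" unfolding tests_def by simp
  next
    fix x assume "x \<in> tests neg" then show "neg (neg (Sup {x, x})) = x" using T by simp
  next
    fix x y assume "x \<in> tests neg" "y \<in> tests neg"
      "neg (neg (Sup {x, y})) = y \<and> neg (neg (Sup {y, x})) = x"
    then show "x = y" by (metis insert_commute)
  next
    fix x y z assume x: "x \<in> tests neg" and y: "y \<in> tests neg" and z: "z \<in> tests neg"
      and h: "neg (neg (Sup {x, y})) = y \<and> neg (neg (Sup {y, z})) = z"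
    have "neg (neg (sup x (sup y z))) = neg (neg (sup x z))"
      using L2[of x "sup y z"] h T[OF x] by simp
    moreover have "neg (neg (sup x (sup y z))) = z"
      using L2[of "sup x y" z] h T[OF z] by (simp add: sup_assoc)
    ultimately show "neg (neg (Sup {x, z})) = z" by simp
  next
    fix W w assume W: "W \<subseteq> tests neg" and w: "w \<in> W"
    have "sup w (Sup W) = Sup W" using w by (simp add: Sup_upper sup_absorb2)
    then show "neg (neg (Sup {w, neg (neg (Sup W))})) = neg (neg (Sup W))"
      using L2[of w "Sup W"] T W w by auto
  next
    fix W u assume W: "W \<subseteq> tests neg" and u: "u \<in> tests neg"
      and h: "\<forall>w\<in>W. neg (neg (Sup {w, u})) = u"
    let ?X = "insert u ((\<lambda>w. sup w u) ` W)"
    have e1: "Sup ?X = sup (Sup W) u"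
    proof (rule antisym)
      show "Sup ?X \<le> sup (Sup W) u"
        by (auto intro!: Sup_least simp: Sup_upper le_supI1)
      show "sup (Sup W) u \<le> Sup ?X"
      proof (rule sup_least)
        show "Sup W \<le> Sup ?X"
        proof (rule Sup_least)
          fix w assume "w \<in> W"
          then have "sup w u \<in> ?X" by blast
          then show "w \<le> Sup ?X" by (meson Sup_upper order_trans sup_ge1)
        qed
        show "u \<le> Sup ?X" by (rule Sup_upper) simp
      qed
    qed
    have "(\<lambda>x. neg (neg x)) ` ?X = {u}" using h T[OF u] by auto
    then have "neg (neg (Sup ?X)) = neg (neg (Sup {u}))" using L[of ?X] by metis
    then have "neg (neg (Sup ?X)) = u" using T[OF u] by simp
    then show "neg (neg (Sup {neg (neg (Sup W)), u})) = u"
      using e1 L2[of "Sup W" u] T[OF u] by simp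
  qed
  have mod: "left_unital_module mult e (tests neg) (tjoin neg) (\<lambda>k v. neg (neg (mult k v)))"
    unfolding left_unital_module_def
  proof (intro conjI allI impI ballI cjs M1)
    fix v S assume "S \<subseteq> tests neg"
    have "neg (neg (mult v (neg (neg (Sup S))))) = neg (neg (Sup (mult v ` S)))"
      using A1 distl by simp
    also have "\<dots> = neg (neg (Sup ((\<lambda>x. neg (neg x)) ` mult v ` S)))" using L by simp
    finally show "neg (neg (mult v (tjoin neg S))) = tjoin neg ((\<lambda>a. neg (neg (mult v a))) ` S)"
      unfolding tjoin_def by (simp add: image_image)
  next
    fix T :: "'a set" and a
    have "neg (neg (mult (Sup T) a)) = neg (neg (Sup ((\<lambda>t. mult t a) ` T)))"
      using Q unfolding involutive_unital_quantale_def by simp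
    also have "\<dots> = neg (neg (Sup ((\<lambda>x. neg (neg x)) ` (\<lambda>t. mult t a) ` T)))" using L by simp
    finally show "neg (neg (mult (Sup T) a)) = tjoin neg ((\<lambda>t. neg (neg (mult t a))) ` T)"
      unfolding tjoin_def by (simp add: image_image)
  next
    fix u v a
    show "neg (neg (mult u (neg (neg (mult v a))))) = neg (neg (mult (mult u v) a))"
      using A1 assoc by simp
  next
    fix a assume "a \<in> tests neg" then show "neg (neg (mult e a)) = a" using T unit by simp
  qed
  have bounds: "\<forall>v \<in> tests neg. tle neg (neg (neg (Sup {}))) v \<and> tle neg v (neg (neg (Sup UNIV)))"
  proof
    fix v assume v: "v \<in> tests neg"
    have "neg (neg (sup (neg (neg (Sup {}))) v)) = v"
      using L2[of "Sup {}" v] T[OF v] by simp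
    moreover have "neg (neg (sup v (neg (neg (Sup UNIV))))) = neg (neg (Sup UNIV))"
      using L2[of v "Sup UNIV"] T[OF v] by simp
    ultimately show "tle neg (neg (neg (Sup {}))) v \<and> tle neg v (neg (neg (Sup UNIV)))"
      unfolding tle_def tjoin_def by simp
  qed
  show ?thesis using triple mod bounds unfolding tests_def by auto
qed

end
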